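(* Consider the second-order Kuramoto model with bonding force $$\dot\theta_i=\omega_i,\qquad \dot\omega_i=\frac{1}{N}\sum_{j=1}^N\big[\kappa_0\cos(\theta_j-\theta_i)+\kappa_1\big](\omega_j-\omega_i)+\frac{\kappa_2}{N}\sum_{j=1}^N\big[|\theta_j-\theta_i|-\theta^\infty_{ij}\big]\operatorname{sgn}(\theta_j-\theta_i),\quad i\in[N].$$ Suppose $(\Theta^0,W^0)\in\mathcal{S}$, $\mathcal{E}(0)<\frac{\kappa_2(\min_{i\ne j}\theta^\infty_{ij})^2}{2N}$, $\kappa_0\cos\mathcal{U}+\kappa_1>0$, $\kappa_2>0$, and let $\{(\theta_i,\omega_i)\}$ be a global smooth solution. Then: (i) $\lim_{t\to\infty}\max_{i,j}|\dot\theta_j(t)-\dot\theta_i(t)|=0$; (ii) if $\sum_{i=1}^N\omega_i^0=0$, then $\lim_{t\to\infty}\max_{1\le i\le N}|\omega_i(t)|=0$.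
   Context: $N\ge2$, $\kappa_0,\kappa_1\ge0$; $[\theta^\infty_{ij}]$ real symmetric with zero diagonal; $\operatorname{sgn}$ the sign function; $\omega_i^0=\omega_i(0)$. $\mathcal{E}:=\frac12\sum_i|\omega_i|^2+\frac{\kappa_2}{4N}\sum_{i,j}(|\theta_j-\theta_i|-\theta^\infty_{ij})^2$; $\mathcal{U}:=\max_{i\ne j}\theta^\infty_{ij}+\sqrt{2N\mathcal{E}(0)/\kappa_2}$; $\mathcal{S}:=\{(\Theta,W)\in\mathbb{R}^{2N}:|\theta_i-\theta_j|<\mathcal{U}<\pi\ \forall i,j\}$. *)

theory Defs
  imports "HOL-Analysis.Analysis"
begin

text \<open>Oscillators are indexed by 0..N-1; states are functions nat => real.\<close>

definition kur_energy :: "nat \<Rightarrow> real \<Rightarrow> (nat \<Rightarrow> nat \<Rightarrow> real) \<Rightarrow> (nat \<Rightarrow> real) \<Rightarrow> (nat \<Rightarrow> real) \<Rightarrow> real" where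
  "kur_energy N k2 thinf th om =
     (1/2) * (\<Sum>i<N. (om i)\<^sup>2)
     + k2 / (4 * real N) * (\<Sum>i<N. \<Sum>j<N. (\<bar>th j - th i\<bar> - thinf i j)\<^sup>2)"

definition kur_U :: "nat \<Rightarrow> real \<Rightarrow> (nat \<Rightarrow> nat \<Rightarrow> real) \<Rightarrow> real \<Rightarrow> real" where
  "kur_U N k2 thinf E0 =
     Max {thinf i j | i j. i < N \<and> j < N \<and> i \<noteq> j} + sqrt (2 * real N * E0 / k2)"

definition kur_rhs :: "nat \<Rightarrow> real \<Rightarrow> real \<Rightarrow> real \<Rightarrow> (nat \<Rightarrow> nat \<Rightarrow> real) \<Rightarrow> (nat \<Rightarrow> real) \<Rightarrow> (nat \<Rightarrow> real) \<Rightarrow> nat \<Rightarrow> real" where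
  "kur_rhs N k0 k1 k2 thinf th om i =
     (1 / real N) * (\<Sum>j<N. (k0 * cos (th j - th i) + k1) * (om j - om i))
     + (k2 / real N) * (\<Sum>j<N. (\<bar>th j - th i\<bar> - thinf i j) * sgn (th j - th i))"

end

theory Submission
  imports Defs
begin


lemma abs_deriv:
  fixes x :: real assumes "x \<noteq> 0"
  shows "(abs has_real_derivative sgn x) (at x)"
proof (cases "x > 0")
  case True
  have "((\<lambda>y. y) has_real_derivative 1) (at x)" by (rule DERIV_ident)
  then have "(abs has_real_derivative 1) (at x)"
    by (rule has_field_derivative_transform_within_open[where S="{0<..}"]) (use True in auto)
  then show ?thesis using True by simp
next
  case False
  then have "x < 0" using assms by auto
  have "((\<lambda>y. - y) has_real_derivative -1) (at x)" by (rule DERIV_minus[OF DERIV_ident])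
  then have "(abs has_real_derivative -1) (at x)"
    by (rule has_field_derivative_transform_within_open[where S="{..<0}"]) (use \<open>x<0\<close> in auto)
  then show ?thesis using \<open>x<0\<close> by simp
qed

lemma antisym_sum0:
  fixes G :: "nat \<Rightarrow> nat \<Rightarrow> real"
  assumes "\<And>i j. i \<in> I \<Longrightarrow> j \<in> I \<Longrightarrow> G j i = - G i j"
  shows "(\<Sum>i\<in>I. \<Sum>j\<in>I. G i j) = 0"
proof -
  have "(\<Sum>i\<in>I. \<Sum>j\<in>I. G i j) = (\<Sum>j\<in>I. \<Sum>i\<in>I. G i j)" by (rule sum.swap)
  also have "\<dots> = (\<Sum>j\<in>I. \<Sum>i\<in>I. - G j i)"
  proof (rule sum.cong[OF refl])
    fix j assume "j \<in> I"
    show "(\<Sum>i\<in>I. G i j) = (\<Sum>i\<in>I. - G j i)"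
    proof (rule sum.cong[OF refl])
      fix i assume "i \<in> I"
      then show "G i j = - G j i" using assms[of j i] \<open>j \<in> I\<close> by blast
    qed
  qed
  also have "\<dots> = - (\<Sum>i\<in>I. \<Sum>j\<in>I. G i j)" by (simp add: sum_negf)
  finally show ?thesis by simp
qed

lemma energy_pair:
  fixes N :: nat and k2 :: real and thinf :: "nat \<Rightarrow> nat \<Rightarrow> real" and th om :: "nat \<Rightarrow> real"
  assumes k2: "k2 > 0" and sym: "\<forall>i<N. \<forall>j<N. thinf i j = thinf j i"
    and i: "i < N" and j: "j < N" and ij: "i \<noteq> j"
  shows "(\<bar>th j - th i\<bar> - thinf i j)\<^sup>2 \<le> 2 * real N * kur_energy N k2 thinf th om / k2"
proof -
  define f where "f i j = (\<bar>th j - th i\<bar> - thinf i j)\<^sup>2" for i j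
  have fs: "f j i = f i j" using sym[rule_format, OF j i] unfolding f_def by (simp add: abs_minus_commute)
  have "f i j + f j i \<le> (\<Sum>j'<N. f i j') + (\<Sum>j'<N. f j j')"
    by (intro add_mono member_le_sum) (auto simp: f_def i j)
  also have "\<dots> = (\<Sum>i'\<in>{i,j}. \<Sum>j'<N. f i' j')" using ij by simp
  also have "\<dots> \<le> (\<Sum>i'<N. \<Sum>j'<N. f i' j')"
    by (intro sum_mono2) (auto simp: f_def i j intro!: sum_nonneg)
  finally have A: "2 * f i j \<le> (\<Sum>i'<N. \<Sum>j'<N. f i' j')" using fs by simp
  have N0: "real N > 0" using i by simp
  define S where "S = (\<Sum>i'<N. \<Sum>j'<N. f i' j')"
  have S2: "(\<Sum>i<N. \<Sum>j<N. (\<bar>th j - th i\<bar> - thinf i j)\<^sup>2) = S"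
    unfolding S_def f_def ..
  have E: "kur_energy N k2 thinf th om = (1/2) * (\<Sum>i<N. (om i)\<^sup>2) + k2 / (4 * real N) * S"
    unfolding kur_energy_def S2 ..
  have "k2 / (4 * real N) * (2 * f i j) \<le> k2 / (4 * real N) * S"
    using A k2 N0 unfolding S_def by (intro mult_left_mono) auto
  moreover have "0 \<le> (1/2) * (\<Sum>i<N. (om i)\<^sup>2)" by (auto intro!: sum_nonneg)
  ultimately have "k2 / (4 * real N) * (2 * f i j) \<le> kur_energy N k2 thinf th om"
    unfolding E by linarith
  then have "f i j \<le> kur_energy N k2 thinf th om * (2 * real N) / k2"
    using k2 N0 by (simp add: field_simps)
  then show ?thesis unfolding f_def by (simp add: mult_ac)
qed

lemma energy_om:
  assumes k2: "k2 > 0" and i: "i < N"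
  shows "(om i)\<^sup>2 \<le> 2 * kur_energy N k2 thinf th om"
proof -
  have "(om i)\<^sup>2 \<le> (\<Sum>i<N. (om i)\<^sup>2)" by (rule member_le_sum) (use i in auto)
  moreover have "0 \<le> k2 / (4 * real N) * (\<Sum>i<N. \<Sum>j<N. (\<bar>th j - th i\<bar> - thinf i j)\<^sup>2)"
    using k2 by (intro mult_nonneg_nonneg sum_nonneg) auto
  ultimately show ?thesis unfolding kur_energy_def by simp
qed

lemma energy_nonneg:
  assumes k2: "k2 > 0"
  shows "0 \<le> kur_energy N k2 thinf th om"
  unfolding kur_energy_def using k2 by (intro add_nonneg_nonneg mult_nonneg_nonneg sum_nonneg) auto



lemma dissip_identity:
  fixes x :: "nat \<Rightarrow> real" and A F :: "nat \<Rightarrow> nat \<Rightarrow> real" and N :: nat and k2 :: real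
  assumes Asym: "\<And>i j. i < N \<Longrightarrow> j < N \<Longrightarrow> A j i = A i j"
    and Fanti: "\<And>i j. i < N \<Longrightarrow> j < N \<Longrightarrow> F j i = - F i j"
  shows "(\<Sum>i<N. x i * (1 / real N * (\<Sum>j<N. A i j * (x j - x i)) + k2 / real N * (\<Sum>j<N. F i j)))
         + k2 / (4 * real N) * (\<Sum>i<N. \<Sum>j<N. 2 * F i j * (x j - x i))
         = - (1 / (2 * real N)) * (\<Sum>i<N. \<Sum>j<N. A i j * (x j - x i)\<^sup>2)"
proof -
  define h where "h = 1 / (2 * real N)"
  have c1: "1 / real N = 2 * h" and c2: "k2 / real N = k2 * (2 * h)"
    unfolding h_def by simp_all
  define H where "H i j = h * A i j * (x j - x i) * (x i + x j)
      + k2 * h * F i j * (x i + x j)" for i j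
  have H0: "(\<Sum>i\<in>{..<N}. \<Sum>j\<in>{..<N}. H i j) = 0"
  proof (rule antisym_sum0)
    fix i j assume "i \<in> {..<N}" "j \<in> {..<N}"
    then have a: "A j i = A i j" and f: "F j i = - F i j" using Asym[of i j] Fanti[of i j] by auto
    show "H j i = - H i j" unfolding H_def a f by (simp add: algebra_simps)
  qed
  have p1: "(\<Sum>i<N. x i * (1 / real N * (\<Sum>j<N. A i j * (x j - x i)) + k2 / real N * (\<Sum>j<N. F i j)))
      = (\<Sum>i<N. \<Sum>j<N. x i * (2 * h * (A i j * (x j - x i))) + x i * (k2 * (2 * h) * F i j))"
    unfolding c1 c2 by (simp only: distrib_left sum_distrib_left sum.distrib)
  have p2: "k2 / (4 * real N) * (\<Sum>i<N. \<Sum>j<N. 2 * F i j * (x j - x i))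
      = (\<Sum>i<N. \<Sum>j<N. k2 * h * (F i j * (x j - x i)))"
  proof -
    have "k2 / (4 * real N) * (\<Sum>i<N. \<Sum>j<N. 2 * F i j * (x j - x i))
      = (\<Sum>i<N. \<Sum>j<N. k2 / (4 * real N) * (2 * F i j * (x j - x i)))"
      by (simp only: sum_distrib_left)
    also have "\<dots> = (\<Sum>i<N. \<Sum>j<N. k2 * h * (F i j * (x j - x i)))"
      unfolding h_def by (intro sum.cong refl) simp
    finally show ?thesis .
  qed
  have p3: "1 / (2 * real N) * (\<Sum>i<N. \<Sum>j<N. A i j * (x j - x i)\<^sup>2)
      = (\<Sum>i<N. \<Sum>j<N. h * (A i j * (x j - x i)\<^sup>2))"
    unfolding h_def by (simp only: sum_distrib_left)
  have p4: "(\<Sum>i<N. \<Sum>j<N. x i * (2 * h * (A i j * (x j - x i))) + x i * (k2 * (2 * h) * F i j))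
      + (\<Sum>i<N. \<Sum>j<N. k2 * h * (F i j * (x j - x i)))
      + (\<Sum>i<N. \<Sum>j<N. h * (A i j * (x j - x i)\<^sup>2))
      = (\<Sum>i<N. \<Sum>j<N. x i * (2 * h * (A i j * (x j - x i))) + x i * (k2 * (2 * h) * F i j)
          + k2 * h * (F i j * (x j - x i)) + h * (A i j * (x j - x i)\<^sup>2))"
    by (simp only: sum.distrib)
  have p5: "(\<Sum>i<N. \<Sum>j<N. x i * (2 * h * (A i j * (x j - x i))) + x i * (k2 * (2 * h) * F i j)
          + k2 * h * (F i j * (x j - x i)) + h * (A i j * (x j - x i)\<^sup>2))
      = (\<Sum>i<N. \<Sum>j<N. H i j)"
    unfolding H_def by (intro sum.cong refl) (simp add: algebra_simps power2_eq_square)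
  show ?thesis using p1 p2 p3 p4 p5 H0 by linarith
qed

lemma rhs_sum_zero:
  fixes x :: "nat \<Rightarrow> real" and A F :: "nat \<Rightarrow> nat \<Rightarrow> real" and N :: nat and k2 :: real
  assumes Asym: "\<And>i j. i < N \<Longrightarrow> j < N \<Longrightarrow> A j i = A i j"
    and Fanti: "\<And>i j. i < N \<Longrightarrow> j < N \<Longrightarrow> F j i = - F i j"
  shows "(\<Sum>i<N. 1 / real N * (\<Sum>j<N. A i j * (x j - x i)) + k2 / real N * (\<Sum>j<N. F i j)) = 0"
proof -
  define r where "r = 1 / real N"
  have r1: "k2 / real N = k2 * r" and r0: "1 / real N = r" unfolding r_def by simp_all
  have "(\<Sum>i\<in>{..<N}. \<Sum>j\<in>{..<N}. r * (A i j * (x j - x i)) + k2 * r * F i j) = 0"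
  proof (rule antisym_sum0)
    fix i j assume "i \<in> {..<N}" "j \<in> {..<N}"
    then have a: "A j i = A i j" and f: "F j i = - F i j" using Asym[of i j] Fanti[of i j] by auto
    show "r * (A j i * (x i - x j)) + k2 * r * F j i = - (r * (A i j * (x j - x i)) + k2 * r * F i j)"
      unfolding a f by (simp add: algebra_simps)
  qed
  moreover have "(\<Sum>i<N. r * (\<Sum>j<N. A i j * (x j - x i)) + k2 * r * (\<Sum>j<N. F i j))
     = (\<Sum>i\<in>{..<N}. \<Sum>j\<in>{..<N}. r * (A i j * (x j - x i)) + k2 * r * F i j)"
    by (simp only: sum_distrib_left sum.distrib)
  ultimately show ?thesis unfolding r1 r0 by simp
qed



locale kur =
  fixes N :: nat and k0 k1 k2 :: real
    and thinf :: "nat \<Rightarrow> nat \<Rightarrow> real"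
    and th om :: "real \<Rightarrow> nat \<Rightarrow> real"
  assumes N2: "N \<ge> 2"
    and k0: "k0 \<ge> 0" and k1: "k1 \<ge> 0" and k2: "k2 > 0"
    and sym: "\<forall>i<N. \<forall>j<N. thinf i j = thinf j i"
    and diag: "\<forall>i<N. thinf i i = 0"
    and ode_th: "\<forall>i<N. \<forall>t\<ge>0. ((\<lambda>s. th s i) has_real_derivative om t i) (at t within {0..})"
    and ode_om: "\<forall>i<N. \<forall>t\<ge>0. ((\<lambda>s. om s i) has_real_derivative
                   kur_rhs N k0 k1 k2 thinf (th t) (om t) i) (at t within {0..})"
    and init_S: "\<forall>i<N. \<forall>j<N. \<bar>th 0 i - th 0 j\<bar> < kur_U N k2 thinf (kur_energy N k2 thinf (th 0) (om 0))"
    and U_pi: "kur_U N k2 thinf (kur_energy N k2 thinf (th 0) (om 0)) < pi"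
    and E0: "kur_energy N k2 thinf (th 0) (om 0)
               < k2 * (Min {thinf i j | i j. i < N \<and> j < N \<and> i \<noteq> j})\<^sup>2 / (2 * real N)"
    and coup: "k0 * cos (kur_U N k2 thinf (kur_energy N k2 thinf (th 0) (om 0))) + k1 > 0"
begin

definition "E t = kur_energy N k2 thinf (th t) (om t)"
definition "E0v = E 0"
definition "U = kur_U N k2 thinf E0v"
definition "PS = {thinf i j | i j. i < N \<and> j < N \<and> i \<noteq> j}"
definition "mn = Min PS"
definition "mx = Max PS"
definition "R = sqrt (2 * real N * E0v / k2)"
definition "aa = k0 * cos U + k1"
definition "AA t i j = k0 * cos (th t j - th t i) + k1"
definition "FF t i j = (\<bar>th t j - th t i\<bar> - thinf i j) * sgn (th t j - th t i)"
definition "Q t \<longleftrightarrow> (\<forall>i<N. \<forall>j<N. i \<noteq> j \<longrightarrow> th t j \<noteq> th t i \<and> AA t i j > 0)"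

lemma N0: "N > 0" and Nr: "real N > 0" using N2 by auto

lemma sym': "i < N \<Longrightarrow> j < N \<Longrightarrow> thinf j i = thinf i j"
  using sym by auto

lemma PS_fin: "finite PS"
proof -
  have "PS \<subseteq> (\<lambda>(i,j). thinf i j) ` ({..<N} \<times> {..<N})" unfolding PS_def by auto
  then show ?thesis by (rule finite_subset) auto
qed

lemma PS_ne: "PS \<noteq> {}"
proof -
  have "thinf 0 1 \<in> PS" unfolding PS_def using N2 by force
  then show ?thesis by auto
qed

lemma mn_le: "i < N \<Longrightarrow> j < N \<Longrightarrow> i \<noteq> j \<Longrightarrow> mn \<le> thinf i j"
  unfolding mn_def using PS_fin by (intro Min_le) (auto simp: PS_def)

lemma mx_ge: "i < N \<Longrightarrow> j < N \<Longrightarrow> i \<noteq> j \<Longrightarrow> thinf i j \<le> mx"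
  unfolding mx_def using PS_fin by (intro Max_ge) (auto simp: PS_def)

lemma mn_in: "\<exists>i j. i < N \<and> j < N \<and> i \<noteq> j \<and> thinf i j = mn"
proof -
  have "mn \<in> PS" unfolding mn_def using PS_fin PS_ne by (rule Min_in)
  then obtain i j where "mn = thinf i j" "i < N" "j < N" "i \<noteq> j" unfolding PS_def by auto
  then show ?thesis by (intro exI[of _ i] exI[of _ j]) simp
qed

lemma U_eq: "U = mx + R"
  unfolding U_def kur_U_def mx_def PS_def R_def ..

lemma E0lt: "E0v < k2 * mn\<^sup>2 / (2 * real N)"
  using E0 unfolding E0v_def E_def mn_def PS_def .

lemma E_nonneg: "0 \<le> E t"
  unfolding E_def by (rule energy_nonneg[OF k2])

lemma E0v_nonneg: "0 \<le> E0v"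
  unfolding E0v_def by (rule E_nonneg)

lemma pair_sq: "i < N \<Longrightarrow> j < N \<Longrightarrow> i \<noteq> j \<Longrightarrow>
    (\<bar>th t j - th t i\<bar> - thinf i j)\<^sup>2 \<le> 2 * real N * E t / k2"
  unfolding E_def by (rule energy_pair[OF k2 sym])

lemma mn_pos: "mn > 0"
proof (rule ccontr)
  assume "\<not> mn > 0"
  then have m: "mn \<le> 0" by simp
  obtain i j where ij: "i < N" "j < N" "i \<noteq> j" "thinf i j = mn" using mn_in by blast
  have "0 \<le> - mn" using m by simp
  also have "- mn \<le> \<bar>th 0 j - th 0 i\<bar> - thinf i j" using ij(4) by simp
  finally have "(- mn)\<^sup>2 \<le> (\<bar>th 0 j - th 0 i\<bar> - thinf i j)\<^sup>2"
    using \<open>- mn \<le> _\<close> m by (intro power_mono) auto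
  also have "\<dots> \<le> 2 * real N * E 0 / k2" using pair_sq[OF ij(1-3)] .
  finally have "mn\<^sup>2 \<le> 2 * real N * E0v / k2" unfolding E0v_def by simp
  moreover have "2 * real N * E0v / k2 < mn\<^sup>2"
    using E0lt k2 Nr by (simp add: field_simps)
  ultimately show False by simp
qed

lemma R_nonneg: "0 \<le> R"
  unfolding R_def using E0v_nonneg k2 by simp

lemma R_lt: "R < mn"
proof -
  have "2 * real N * E0v / k2 < mn\<^sup>2"
    using E0lt k2 Nr by (simp add: field_simps)
  then have "R < sqrt (mn\<^sup>2)" unfolding R_def by (rule real_sqrt_less_mono)
  then show ?thesis using mn_pos by simp
qed

lemma U_pos: "0 < U"
  using init_S N2 unfolding U_def E0v_def E_def by force

lemma U_lt_pi: "U < pi"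
  using U_pi unfolding U_def E0v_def E_def .

lemma aa_pos: "aa > 0"
  using coup unfolding aa_def U_def E0v_def E_def .

lemma pair_bound:
  assumes "E t \<le> E0v" "i < N" "j < N" "i \<noteq> j"
  shows "\<bar>\<bar>th t j - th t i\<bar> - thinf i j\<bar> \<le> R"
proof -
  have "(\<bar>th t j - th t i\<bar> - thinf i j)\<^sup>2 \<le> 2 * real N * E t / k2"
    using pair_sq assms(2-4) .
  also have "\<dots> \<le> 2 * real N * E0v / k2"
    using assms(1) k2 by (intro divide_right_mono mult_left_mono) auto
  finally have "sqrt ((\<bar>th t j - th t i\<bar> - thinf i j)\<^sup>2) \<le> R"
    unfolding R_def by (rule real_sqrt_le_mono)
  then show ?thesis by simp
qed

lemma pair_facts:
  assumes "E t \<le> E0v" "i < N" "j < N" "i \<noteq> j"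
  shows "th t j \<noteq> th t i" "\<bar>th t j - th t i\<bar> \<le> U"
proof -
  have b: "\<bar>\<bar>th t j - th t i\<bar> - thinf i j\<bar> \<le> R" by (rule pair_bound[OF assms])
  have "mn \<le> thinf i j" "thinf i j \<le> mx" using mn_le mx_ge assms(2-4) by auto
  then show "th t j \<noteq> th t i" "\<bar>th t j - th t i\<bar> \<le> U"
    using b R_lt unfolding U_eq by auto
qed

lemma diff_le_U:
  assumes "E t \<le> E0v" "i < N" "j < N"
  shows "\<bar>th t j - th t i\<bar> \<le> U"
  using pair_facts(2)[OF assms] U_pos by (cases "i = j") auto

lemma AA_ge:
  assumes "E t \<le> E0v" "i < N" "j < N"
  shows "aa \<le> AA t i j"
proof -
  have d: "\<bar>th t j - th t i\<bar> \<le> U" by (rule diff_le_U[OF assms])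
  have "cos U \<le> cos \<bar>th t j - th t i\<bar>"
    using d U_pos U_lt_pi by (subst cos_mono_le_eq) auto
  then have "cos U \<le> cos (th t j - th t i)" by simp
  then have "k0 * cos U \<le> k0 * cos (th t j - th t i)" using k0 by (rule mult_left_mono)
  then show ?thesis unfolding aa_def AA_def by simp
qed

lemma Q_of_E: "E t \<le> E0v \<Longrightarrow> Q t"
  unfolding Q_def using pair_facts(1) AA_ge aa_pos by (meson less_le_trans)


lemma th_deriv: "i < N \<Longrightarrow> t \<ge> 0 \<Longrightarrow> ((\<lambda>s. th s i) has_real_derivative om t i) (at t within {0..})"
  using ode_th by blast

lemma om_deriv: "i < N \<Longrightarrow> t \<ge> 0 \<Longrightarrow> ((\<lambda>s. om s i) has_real_derivative
                   kur_rhs N k0 k1 k2 thinf (th t) (om t) i) (at t within {0..})"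
  using ode_om by blast

lemma at_pos: "t > (0::real) \<Longrightarrow> at t within {0..} = at t"
  by (rule at_within_interior) simp

lemma th_at: "i < N \<Longrightarrow> t > 0 \<Longrightarrow> ((\<lambda>s. th s i) has_real_derivative om t i) (at t)"
  using th_deriv[of i t] at_pos[of t] by simp

lemma om_at: "i < N \<Longrightarrow> t > 0 \<Longrightarrow> ((\<lambda>s. om s i) has_real_derivative
                   kur_rhs N k0 k1 k2 thinf (th t) (om t) i) (at t)"
  using om_deriv[of i t] at_pos[of t] by simp

lemma th_cont: "i \<in> {..<N} \<Longrightarrow> continuous_on {0..} (\<lambda>s. th s i)"
  unfolding continuous_on_eq_continuous_within using DERIV_continuous[OF th_deriv] by auto

lemma om_cont: "i \<in> {..<N} \<Longrightarrow> continuous_on {0..} (\<lambda>s. om s i)"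
  unfolding continuous_on_eq_continuous_within using DERIV_continuous[OF om_deriv] by auto

lemma E_fun: "E = (\<lambda>t. (1/2) * (\<Sum>i<N. (om t i)\<^sup>2)
     + k2 / (4 * real N) * (\<Sum>i<N. \<Sum>j<N. (\<bar>th t j - th t i\<bar> - thinf i j)\<^sup>2))"
  by (rule ext) (simp add: E_def kur_energy_def)

lemma E_cont: "continuous_on {0..} E"
  unfolding E_fun by (intro continuous_intros th_cont om_cont)


definition "Ed t = - (1 / (2 * real N)) * (\<Sum>i<N. \<Sum>j<N. AA t i j * (om t j - om t i)\<^sup>2)"

lemma AA_sym: "AA t j i = AA t i j"
proof -
  have "th t i - th t j = - (th t j - th t i)" by simp
  then show ?thesis unfolding AA_def by (simp only: cos_minus)
qed

lemma FF_anti: "i < N \<Longrightarrow> j < N \<Longrightarrow> FF t j i = - FF t i j"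
proof -
  assume ij: "i < N" "j < N"
  have s: "thinf j i = thinf i j" using sym'[OF ij] .
  have m: "th t i - th t j = - (th t j - th t i)" by simp
  show ?thesis unfolding FF_def s m abs_minus sgn_minus by simp
qed

lemma rhs_eq: "kur_rhs N k0 k1 k2 thinf (th t) (om t) i
   = 1 / real N * (\<Sum>j<N. AA t i j * (om t j - om t i)) + k2 / real N * (\<Sum>j<N. FF t i j)"
  unfolding kur_rhs_def AA_def FF_def ..

lemma rhs_sum: "(\<Sum>i<N. kur_rhs N k0 k1 k2 thinf (th t) (om t) i) = 0"
  unfolding rhs_eq by (rule rhs_sum_zero) (rule AA_sym, rule FF_anti)

lemma Ed_eq: "(\<Sum>i<N. om t i * kur_rhs N k0 k1 k2 thinf (th t) (om t) i)
    + k2 / (4 * real N) * (\<Sum>i<N. \<Sum>j<N. 2 * FF t i j * (om t j - om t i)) = Ed t"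
  unfolding rhs_eq Ed_def by (rule dissip_identity) (rule AA_sym, rule FF_anti)

lemma pair_deriv:
  assumes t: "t > 0" and Qt: "Q t" and ij: "i < N" "j < N"
  shows "((\<lambda>s. (\<bar>th s j - th s i\<bar> - thinf i j)\<^sup>2) has_real_derivative
     2 * FF t i j * (om t j - om t i)) (at t)"
proof (cases "i = j")
  case True
  have f: "(\<lambda>s. (\<bar>th s j - th s i\<bar> - thinf i j)\<^sup>2) = (\<lambda>s. 0)"
    using diag ij True by simp
  show ?thesis unfolding f using True by (simp add: FF_def)
next
  case False
  have ne: "th t j - th t i \<noteq> 0" using Qt False ij unfolding Q_def by auto
  have dd: "((\<lambda>s. th s j - th s i) has_real_derivative om t j - om t i) (at t)"
    by (rule DERIV_diff[OF th_at[OF ij(2) t] th_at[OF ij(1) t]])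
  have ab: "((\<lambda>s. \<bar>th s j - th s i\<bar>) has_real_derivative sgn (th t j - th t i) * (om t j - om t i)) (at t)"
    using DERIV_chain2[OF abs_deriv[OF ne] dd] .
  have ab2: "((\<lambda>s. \<bar>th s j - th s i\<bar> - thinf i j) has_real_derivative sgn (th t j - th t i) * (om t j - om t i) - 0) (at t)"
    by (rule DERIV_diff[OF ab DERIV_const])
  have "((\<lambda>s. (\<bar>th s j - th s i\<bar> - thinf i j) ^ 2) has_real_derivative
      of_nat 2 * ((sgn (th t j - th t i) * (om t j - om t i) - 0) * (\<bar>th t j - th t i\<bar> - thinf i j) ^ (2 - Suc 0))) (at t)"
    by (rule DERIV_power[OF ab2])
  then show ?thesis by (rule DERIV_cong) (simp add: FF_def)
qed

lemma E_deriv: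
  assumes t: "t > 0" and Qt: "Q t"
  shows "(E has_real_derivative Ed t) (at t)"
proof -
  have d1: "((\<lambda>s. (1/2) * (\<Sum>i<N. (om s i)\<^sup>2)) has_real_derivative
      (1/2) * (\<Sum>i<N. 2 * om t i * kur_rhs N k0 k1 k2 thinf (th t) (om t) i)) (at t)"
  proof (rule DERIV_cmult, rule DERIV_sum)
    fix i assume "i \<in> {..<N}"
    then have i: "i < N" by simp
    have "((\<lambda>s. (om s i) ^ 2) has_real_derivative
      of_nat 2 * (kur_rhs N k0 k1 k2 thinf (th t) (om t) i * (om t i) ^ (2 - Suc 0))) (at t)"
      by (rule DERIV_power[OF om_at[OF i t]])
    then show "((\<lambda>s. (om s i)\<^sup>2) has_real_derivative 2 * om t i * kur_rhs N k0 k1 k2 thinf (th t) (om t) i) (at t)"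
      by (rule DERIV_cong) simp
  qed
  have d2: "((\<lambda>s. k2 / (4 * real N) * (\<Sum>i<N. \<Sum>j<N. (\<bar>th s j - th s i\<bar> - thinf i j)\<^sup>2)) has_real_derivative
      k2 / (4 * real N) * (\<Sum>i<N. \<Sum>j<N. 2 * FF t i j * (om t j - om t i))) (at t)"
    by (intro DERIV_cmult DERIV_sum pair_deriv[OF t Qt]) auto
  have "(E has_real_derivative (1/2) * (\<Sum>i<N. 2 * om t i * kur_rhs N k0 k1 k2 thinf (th t) (om t) i)
      + k2 / (4 * real N) * (\<Sum>i<N. \<Sum>j<N. 2 * FF t i j * (om t j - om t i))) (at t)"
    unfolding E_fun by (rule DERIV_add[OF d1 d2])
  moreover have "(1/2) * (\<Sum>i<N. 2 * om t i * kur_rhs N k0 k1 k2 thinf (th t) (om t) i)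
      = (\<Sum>i<N. om t i * kur_rhs N k0 k1 k2 thinf (th t) (om t) i)"
    by (simp add: sum_distrib_left)
  ultimately show ?thesis using Ed_eq[of t] by simp
qed


lemma Ed_nonpos: "Q t \<Longrightarrow> Ed t \<le> 0"
proof -
  assume Qt: "Q t"
  have "0 \<le> (\<Sum>i<N. \<Sum>j<N. AA t i j * (om t j - om t i)\<^sup>2)"
  proof (intro sum_nonneg)
    fix i j assume i: "i \<in> {..<N}" and j: "j \<in> {..<N}"
    show "0 \<le> AA t i j * (om t j - om t i)\<^sup>2"
    proof (cases "i = j")
      case True then show ?thesis by simp
    next
      case False
      then have "AA t i j > 0" using Qt i j unfolding Q_def by auto
      then show ?thesis by simp
    qed
  qed
  then show ?thesis unfolding Ed_def using Nr
    by (simp add: mult_nonneg_nonneg)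
qed

lemma Q_nhd:
  assumes Et: "E t \<le> E0v" and t0: "t \<ge> 0"
  shows "\<exists>d>0. \<forall>s\<ge>0. \<bar>s - t\<bar> < d \<longrightarrow> Q s"
proof -
  have Qt: "Q t" by (rule Q_of_E[OF Et])
  have tl: "((\<lambda>s. th s i) \<longlongrightarrow> th t i) (at t within {0..})" if "i < N" for i
    using DERIV_continuous[OF th_deriv[OF that t0]] unfolding continuous_within .
  have ev: "eventually (\<lambda>s. \<forall>i\<in>{..<N}. \<forall>j\<in>{..<N}. i \<noteq> j \<longrightarrow> th s j \<noteq> th s i \<and> AA s i j > 0) (at t within {0..})"
  proof (intro eventually_ball_finite ballI finite_lessThan)
    fix i j assume i: "i \<in> {..<N}" and j: "j \<in> {..<N}"
    show "eventually (\<lambda>s. i \<noteq> j \<longrightarrow> th s j \<noteq> th s i \<and> AA s i j > 0) (at t within {0..})"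
    proof (cases "i = j")
      case True then show ?thesis by simp
    next
      case False
      have d: "((\<lambda>s. th s j - th s i) \<longlongrightarrow> th t j - th t i) (at t within {0..})"
        using tl i j by (intro tendsto_diff) auto
      have ne: "th t j - th t i \<noteq> 0" and pos: "AA t i j > 0" using Qt False i j unfolding Q_def by auto
      have e1: "eventually (\<lambda>s. th s j - th s i \<noteq> 0) (at t within {0..})"
        by (rule tendsto_imp_eventually_ne[OF d ne])
      have a: "((\<lambda>s. AA s i j) \<longlongrightarrow> AA t i j) (at t within {0..})"
        unfolding AA_def by (intro tendsto_intros d)
      have e2: "eventually (\<lambda>s. 0 < AA s i j) (at t within {0..})"
        by (rule order_tendstoD(1)[OF a pos])
      show ?thesis using e1 e2 by eventually_elim auto
    qed
  qed
  then obtain d where d: "d > 0" and dP: "\<forall>x\<in>{0..}. x \<noteq> t \<and> dist x t < d \<longrightarrow>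
      (\<forall>i\<in>{..<N}. \<forall>j\<in>{..<N}. i \<noteq> j \<longrightarrow> th x j \<noteq> th x i \<and> AA x i j > 0)"
    unfolding eventually_at by blast
  have "\<forall>s\<ge>0. \<bar>s - t\<bar> < d \<longrightarrow> Q s"
  proof (intro allI impI)
    fix s :: real assume s: "s \<ge> 0" "\<bar>s - t\<bar> < d"
    show "Q s"
    proof (cases "s = t")
      case True then show ?thesis using Qt by simp
    next
      case False
      then show ?thesis using dP s unfolding Q_def dist_real_def by auto
    qed
  qed
  then show ?thesis using d by blast
qed

lemma E_le_E0: "t \<ge> 0 \<Longrightarrow> E t \<le> E0v"
proof (rule ccontr)
  assume t0: "t \<ge> 0" and nt: "\<not> E t \<le> E0v"
  define S where "S = {0..t} \<inter> E -` {..E0v}"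
  have cS: "closed S" unfolding S_def
    by (rule continuous_closed_preimage) (auto intro: continuous_on_subset[OF E_cont])
  have S0: "0 \<in> S" unfolding S_def E0v_def using t0 by auto
  have bS: "bdd_above S" unfolding S_def by (rule bdd_above_mono[of "{0..t}"]) auto
  define s0 where "s0 = Sup S"
  have s0S: "s0 \<in> S" unfolding s0_def using cS S0 bS closed_contains_Sup by blast
  then have s0: "0 \<le> s0" "s0 \<le> t" "E s0 \<le> E0v" unfolding S_def by auto
  then have "s0 \<noteq> t" using nt by auto
  then have s0t: "s0 < t" using s0 by simp
  obtain d where d: "d > 0" and dQ: "\<forall>s\<ge>0. \<bar>s - s0\<bar> < d \<longrightarrow> Q s"
    using Q_nhd[OF s0(3) s0(1)] by blast
  define s1 where "s1 = min (s0 + d / 2) t"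
  have s1: "s0 < s1" "s1 \<le> t" unfolding s1_def using d s0t by auto
  have dd: "\<exists>y. (E has_real_derivative y) (at x) \<and> y \<le> 0" if x: "s0 < x" "x < s1" for x
  proof -
    have x0: "x > 0" using x s0 by simp
    have "\<bar>x - s0\<bar> < d" using x s1_def d by auto
    then have Qx: "Q x" using dQ x0 by auto
    show ?thesis using E_deriv[OF x0 Qx] Ed_nonpos[OF Qx] by blast
  qed
  have cc: "continuous_on {s0..s1} E" using s0 by (intro continuous_on_subset[OF E_cont]) auto
  have "E s1 \<le> E s0"
    by (rule DERIV_nonpos_imp_decreasing_open[OF _ dd cc]) (use s1 in simp)
  then have "s1 \<in> S" unfolding S_def using s0 s1 by auto
  then have "s1 \<le> s0" unfolding s0_def using bS by (rule cSup_upper)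
  then show False using s1 by simp
qed

lemma Q_all: "t \<ge> 0 \<Longrightarrow> Q t"
  using Q_of_E E_le_E0 by blast

lemma E_antitone:
  assumes st: "0 \<le> s" "s \<le> t" shows "E t \<le> E s"
proof -
  have dd: "\<exists>y. (E has_real_derivative y) (at x) \<and> y \<le> 0" if x: "s < x" "x < t" for x
  proof -
    have x0: "x > 0" using x st by simp
    have Qx: "Q x" using Q_all x0 by simp
    show ?thesis using E_deriv[OF x0 Qx] Ed_nonpos[OF Qx] by blast
  qed
  have cc: "continuous_on {s..t} E" using st by (intro continuous_on_subset[OF E_cont]) auto
  show ?thesis by (rule DERIV_nonpos_imp_decreasing_open[OF st(2) dd cc])
qed

lemma Ed_le:
  assumes t0: "t \<ge> 0" and p: "p < N" and q: "q < N"
  shows "Ed t \<le> - (aa / (2 * real N)) * (om t q - om t p)\<^sup>2"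
proof -
  have Et: "E t \<le> E0v" by (rule E_le_E0[OF t0])
  have nn: "0 \<le> AA t i j * (om t j - om t i)\<^sup>2" if "i < N" "j < N" for i j
    using AA_ge[OF Et that] aa_pos by simp
  have "aa * (om t q - om t p)\<^sup>2 \<le> AA t p q * (om t q - om t p)\<^sup>2"
    using AA_ge[OF Et p q] by (intro mult_right_mono) auto
  also have "\<dots> \<le> (\<Sum>j<N. AA t p j * (om t j - om t p)\<^sup>2)"
    using q nn p by (intro member_le_sum[where f="\<lambda>j. AA t p j * (om t j - om t p)\<^sup>2"]) auto
  also have "\<dots> \<le> (\<Sum>i<N. \<Sum>j<N. AA t i j * (om t j - om t i)\<^sup>2)"
    using p nn by (intro member_le_sum[where f="\<lambda>i. \<Sum>j<N. AA t i j * (om t j - om t i)\<^sup>2"] sum_nonneg) auto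
  finally have "aa * (om t q - om t p)\<^sup>2 \<le> (\<Sum>i<N. \<Sum>j<N. AA t i j * (om t j - om t i)\<^sup>2)" .
  then have "(1 / (2 * real N)) * (aa * (om t q - om t p)\<^sup>2) \<le> (1 / (2 * real N)) * (\<Sum>i<N. \<Sum>j<N. AA t i j * (om t j - om t i)\<^sup>2)"
    using Nr by (intro mult_left_mono) auto
  then show ?thesis unfolding Ed_def by simp
qed


definition "W = sqrt (2 * E0v)"

lemma om_bound: "t \<ge> 0 \<Longrightarrow> i < N \<Longrightarrow> \<bar>om t i\<bar> \<le> W"
proof -
  assume t: "t \<ge> 0" and i: "i < N"
  have "(om t i)\<^sup>2 \<le> 2 * E t" unfolding E_def by (rule energy_om[OF k2 i])
  also have "\<dots> \<le> 2 * E0v" using E_le_E0[OF t] by simp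
  finally have "sqrt ((om t i)\<^sup>2) \<le> W" unfolding W_def by (rule real_sqrt_le_mono)
  then show ?thesis by simp
qed

lemma W_nonneg: "0 \<le> W" unfolding W_def using E0v_nonneg by simp

lemma FF_bound: "t \<ge> 0 \<Longrightarrow> i < N \<Longrightarrow> j < N \<Longrightarrow> \<bar>FF t i j\<bar> \<le> R"
proof -
  assume t: "t \<ge> 0" and i: "i < N" and j: "j < N"
  show ?thesis
  proof (cases "i = j")
    case True then show ?thesis using R_nonneg by (simp add: FF_def)
  next
    case False
    have b: "\<bar>\<bar>th t j - th t i\<bar> - thinf i j\<bar> \<le> R"
      by (rule pair_bound[OF E_le_E0[OF t] i j False])
    have "\<bar>sgn (th t j - th t i)\<bar> \<le> 1" by (simp add: abs_sgn_eq)
    then have "\<bar>FF t i j\<bar> \<le> R * 1" unfolding FF_def abs_mult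
      using b R_nonneg by (intro mult_mono) auto
    then show ?thesis by simp
  qed
qed

lemma AA_abs: "\<bar>AA t i j\<bar> \<le> k0 + k1"
proof -
  have "\<bar>k0 * cos (th t j - th t i)\<bar> \<le> k0 * 1" unfolding abs_mult
    using k0 by (intro mult_mono) auto
  then show ?thesis unfolding AA_def using k1 by linarith
qed

definition "M = (k0 + k1) * (2 * W) + k2 * R + 1"

lemma M_pos: "M > 0"
proof -
  have "0 \<le> (k0 + k1) * (2 * W)" using k0 k1 W_nonneg by (intro mult_nonneg_nonneg) auto
  moreover have "0 \<le> k2 * R" using k2 R_nonneg by (intro mult_nonneg_nonneg) auto
  ultimately show ?thesis unfolding M_def by linarith
qed

lemma rhs_bound: "t \<ge> 0 \<Longrightarrow> i < N \<Longrightarrow> \<bar>kur_rhs N k0 k1 k2 thinf (th t) (om t) i\<bar> \<le> M"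
proof -
  assume t: "t \<ge> 0" and i: "i < N"
  have s1: "\<bar>\<Sum>j<N. AA t i j * (om t j - om t i)\<bar> \<le> real N * ((k0 + k1) * (2 * W))"
  proof -
    have "\<bar>\<Sum>j<N. AA t i j * (om t j - om t i)\<bar> \<le> (\<Sum>j<N. \<bar>AA t i j * (om t j - om t i)\<bar>)"
      by (rule sum_abs)
    also have "\<dots> \<le> of_nat (card {..<N}) * ((k0 + k1) * (2 * W))"
    proof (rule sum_bounded_above)
      fix j assume "j \<in> {..<N}"
      then have j: "j < N" by simp
      have "\<bar>om t j - om t i\<bar> \<le> 2 * W"
        using om_bound[OF t j] om_bound[OF t i] by linarith
      then show "\<bar>AA t i j * (om t j - om t i)\<bar> \<le> (k0 + k1) * (2 * W)"
        unfolding abs_mult using AA_abs[of t i j] by (intro mult_mono) auto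
    qed
    finally show ?thesis by simp
  qed
  have s2: "\<bar>\<Sum>j<N. FF t i j\<bar> \<le> real N * R"
  proof -
    have "\<bar>\<Sum>j<N. FF t i j\<bar> \<le> (\<Sum>j<N. \<bar>FF t i j\<bar>)" by (rule sum_abs)
    also have "\<dots> \<le> of_nat (card {..<N}) * R"
      by (rule sum_bounded_above) (use FF_bound[OF t i] in auto)
    finally show ?thesis by simp
  qed
  have "\<bar>kur_rhs N k0 k1 k2 thinf (th t) (om t) i\<bar>
      \<le> \<bar>1 / real N * (\<Sum>j<N. AA t i j * (om t j - om t i))\<bar> + \<bar>k2 / real N * (\<Sum>j<N. FF t i j)\<bar>"
    unfolding rhs_eq by (rule abs_triangle_ineq)
  also have "\<bar>1 / real N * (\<Sum>j<N. AA t i j * (om t j - om t i))\<bar> \<le> (k0 + k1) * (2 * W)"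
  proof -
    have "\<bar>1 / real N * (\<Sum>j<N. AA t i j * (om t j - om t i))\<bar> = (1 / real N) * \<bar>\<Sum>j<N. AA t i j * (om t j - om t i)\<bar>"
      using Nr by (simp add: abs_mult)
    also have "\<dots> \<le> (1 / real N) * (real N * ((k0 + k1) * (2 * W)))"
      using s1 Nr by (intro mult_left_mono) auto
    also have "\<dots> = (k0 + k1) * (2 * W)" using Nr by simp
    finally show ?thesis .
  qed
  also have "\<bar>k2 / real N * (\<Sum>j<N. FF t i j)\<bar> \<le> k2 * R"
  proof -
    have "\<bar>k2 / real N * (\<Sum>j<N. FF t i j)\<bar> = (k2 / real N) * \<bar>\<Sum>j<N. FF t i j\<bar>"
      using Nr k2 by (simp add: abs_mult)
    also have "\<dots> \<le> (k2 / real N) * (real N * R)"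
      using s2 Nr k2 by (intro mult_left_mono) auto
    also have "\<dots> = k2 * R" using Nr by simp
    finally show ?thesis .
  qed
  finally show ?thesis unfolding M_def by simp
qed

lemma om_lip: "i < N \<Longrightarrow> s \<ge> 0 \<Longrightarrow> t \<ge> 0 \<Longrightarrow> \<bar>om s i - om t i\<bar> \<le> M * \<bar>s - t\<bar>"
proof -
  assume i: "i < N" and s: "s \<ge> 0" and t: "t \<ge> 0"
  have "norm (om s i - om t i) \<le> M * norm (s - t)"
  proof (rule field_differentiable_bound[where S="{0..}" and f="\<lambda>z. om z i"
        and f'="\<lambda>z. kur_rhs N k0 k1 k2 thinf (th z) (om z) i"])
    show "convex {0::real..}" by (rule convex_real_interval)
    fix z :: real assume "z \<in> {0..}"
    then have z: "z \<ge> 0" by simp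
    show "((\<lambda>z. om z i) has_field_derivative kur_rhs N k0 k1 k2 thinf (th z) (om z) i) (at z within {0..})"
      by (rule om_deriv[OF i z])
    show "norm (kur_rhs N k0 k1 k2 thinf (th z) (om z) i) \<le> M"
      using rhs_bound[OF z i] by simp
  qed (use s t in auto)
  then show ?thesis by simp
qed


lemma main1:
  assumes e: "\<epsilon> > 0"
  shows "\<exists>T. \<forall>t\<ge>T. \<forall>i<N. \<forall>j<N. \<bar>om t j - om t i\<bar> < \<epsilon>"
proof -
  define L where "L = Inf (E ` {0..})"
  have bb: "bdd_below (E ` {0..})" using E_nonneg by (intro bdd_belowI[of _ 0]) auto
  define dl where "dl = \<epsilon> / (4 * M)"
  define c where "c = aa * \<epsilon>\<^sup>2 / (8 * real N)"
  have dl: "dl > 0" unfolding dl_def using e M_pos by simp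
  have c: "c > 0" unfolding c_def using e aa_pos Nr by simp
  have "Inf (E ` {0..}) < L + c * dl" unfolding L_def using c dl by simp
  moreover have "E ` {0..} \<noteq> {}" by auto
  ultimately obtain x where "x \<in> E ` {0..}" "x < L + c * dl" by (meson cInf_lessD)
  then obtain T0 where T0: "T0 \<ge> 0" "E T0 < L + c * dl" by auto
  have "\<forall>t\<ge>T0 + 1. \<forall>i<N. \<forall>j<N. \<bar>om t j - om t i\<bar> < \<epsilon>"
  proof (intro allI impI)
    fix t i j assume t: "T0 + 1 \<le> t" and i: "i < N" and j: "j < N"
    have t0: "t > 0" using t T0 by simp
    show "\<bar>om t j - om t i\<bar> < \<epsilon>"
    proof (rule ccontr)
      assume "\<not> \<bar>om t j - om t i\<bar> < \<epsilon>"
      then have big: "\<bar>om t j - om t i\<bar> \<ge> \<epsilon>" by simp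
      define g where "g s = E s + c * s" for s
      have dd: "\<exists>y. (g has_real_derivative y) (at s) \<and> y \<le> 0" if s: "t < s" "s < t + dl" for s
      proof -
        have s0: "s > 0" using s t0 by simp
        have l1: "\<bar>om s j - om t j\<bar> \<le> M * \<bar>s - t\<bar>" using om_lip[OF j, of s t] s t0 by simp
        have l2: "\<bar>om s i - om t i\<bar> \<le> M * \<bar>s - t\<bar>" using om_lip[OF i, of s t] s t0 by simp
        have "M * \<bar>s - t\<bar> \<le> M * dl" using s M_pos by (intro mult_left_mono) auto
        also have "M * dl = \<epsilon> / 4" unfolding dl_def using M_pos by simp
        finally have "M * \<bar>s - t\<bar> \<le> \<epsilon> / 4" .
        then have "\<bar>om s j - om s i\<bar> \<ge> \<epsilon> / 2" using l1 l2 big by linarith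
        then have "(\<epsilon> / 2)\<^sup>2 \<le> \<bar>om s j - om s i\<bar>\<^sup>2" using e by (intro power_mono) auto
        then have sq: "(\<epsilon> / 2)\<^sup>2 \<le> (om s j - om s i)\<^sup>2" by simp
        have "Ed s \<le> - (aa / (2 * real N)) * (om s j - om s i)\<^sup>2"
          using Ed_le[of s i j] s0 i j by simp
        also have "\<dots> \<le> - (aa / (2 * real N)) * (\<epsilon> / 2)\<^sup>2"
        proof -
          have "0 \<le> aa / (2 * real N)" using aa_pos Nr by simp
          then have "(aa / (2 * real N)) * (\<epsilon> / 2)\<^sup>2 \<le> (aa / (2 * real N)) * (om s j - om s i)\<^sup>2"
            by (rule mult_left_mono[OF sq])
          then show ?thesis by simp
        qed
        also have "\<dots> = - c" unfolding c_def by (simp add: power2_eq_square)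
        finally have "Ed s + c \<le> 0" by simp
        moreover have "(g has_real_derivative Ed s + c * 1) (at s)"
          unfolding g_def[abs_def] by (rule DERIV_add[OF E_deriv[OF s0 Q_all[OF less_imp_le[OF s0]]] DERIV_cmult[OF DERIV_ident]])
        ultimately show ?thesis by auto
      qed
      have cE: "continuous_on {t..t + dl} E" using t0 by (intro continuous_on_subset[OF E_cont]) auto
      have cc: "continuous_on {t..t + dl} g" unfolding g_def[abs_def]
        by (rule continuous_on_add[OF cE continuous_on_mult[OF continuous_on_const continuous_on_id]])
      have "g (t + dl) \<le> g t"
        by (rule DERIV_nonpos_imp_decreasing_open[OF _ dd cc]) (use dl in simp)
      then have E1: "E (t + dl) \<le> E t - c * dl" unfolding g_def by (simp add: algebra_simps)
      have "E t \<le> E T0" using E_antitone[of T0 t] T0 t by simp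
      moreover have "L \<le> E (t + dl)" unfolding L_def using bb t0 dl
        by (intro cInf_lower) auto
      ultimately show False using E1 T0 by linarith
    qed
  qed
  then show ?thesis by blast
qed


lemma sum_const: "t \<ge> 0 \<Longrightarrow> (\<Sum>i<N. om t i) = (\<Sum>i<N. om 0 i)"
proof -
  assume t: "t \<ge> 0"
  have "\<exists>c. \<forall>x\<in>{0::real..}. (\<Sum>i<N. om x i) = c"
  proof (rule has_field_derivative_zero_constant)
    show "convex {0::real..}" by (rule convex_real_interval)
    fix x :: real assume "x \<in> {0..}"
    then have x: "x \<ge> 0" by simp
    have "((\<lambda>x. \<Sum>i<N. om x i) has_field_derivative (\<Sum>i<N. kur_rhs N k0 k1 k2 thinf (th x) (om x) i)) (at x within {0..})"
      by (rule DERIV_sum) (use om_deriv x in auto)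
    then show "((\<lambda>x. \<Sum>i<N. om x i) has_field_derivative 0) (at x within {0..})"
      unfolding rhs_sum .
  qed
  then obtain c where "\<forall>x\<in>{0::real..}. (\<Sum>i<N. om x i) = c" by blast
  then show ?thesis using t by auto
qed

lemma fin2: "finite {\<bar>om t j - om t i\<bar> | i j. i < N \<and> j < N}"
  by (rule finite_image_set2) auto

lemma part1: "((\<lambda>t. Max {\<bar>om t j - om t i\<bar> | i j. i < N \<and> j < N}) \<longlongrightarrow> 0) at_top"
proof (rule tendstoI)
  fix e :: real assume e: "e > 0"
  obtain T where T: "\<forall>t\<ge>T. \<forall>i<N. \<forall>j<N. \<bar>om t j - om t i\<bar> < e" using main1[OF e] by blast
  show "eventually (\<lambda>t. dist (Max {\<bar>om t j - om t i\<bar> | i j. i < N \<and> j < N}) 0 < e) at_top"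
    unfolding eventually_at_top_linorder
  proof (intro exI allI impI)
    fix t assume t: "t \<ge> T"
    define S where "S = {\<bar>om t j - om t i\<bar> | i j. i < N \<and> j < N}"
    have fS: "finite S" unfolding S_def by (rule fin2)
    have z: "\<bar>om t 0 - om t 0\<bar> \<in> S" unfolding S_def using N0 by blast
    then have nS: "S \<noteq> {}" by auto
    have ge: "0 \<le> Max S" using Max_ge[OF fS z] by simp
    have lt: "Max S < e" using fS nS T t unfolding S_def by (subst Max_less_iff) auto
    show "dist (Max {\<bar>om t j - om t i\<bar> | i j. i < N \<and> j < N}) 0 < e"
      using ge lt unfolding S_def[symmetric] by simp
  qed
qed

lemma part2:
  assumes s0: "(\<Sum>i<N. om 0 i) = 0"
  shows "((\<lambda>t. Max {\<bar>om t i\<bar> | i. i < N}) \<longlongrightarrow> 0) at_top"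
proof (rule tendstoI)
  fix e :: real assume e: "e > 0"
  obtain T where T: "\<forall>t\<ge>T. \<forall>i<N. \<forall>j<N. \<bar>om t j - om t i\<bar> < e" using main1[OF e] by blast
  show "eventually (\<lambda>t. dist (Max {\<bar>om t i\<bar> | i. i < N}) 0 < e) at_top"
    unfolding eventually_at_top_linorder
  proof (intro exI[of _ "max T 0"] allI impI)
    fix t assume t: "t \<ge> max T 0"
    have each: "\<bar>om t i\<bar> < e" if i: "i < N" for i
    proof -
      have st: "(\<Sum>j<N. om t j) = 0" using sum_const[of t] t s0 by simp
      have "(\<Sum>j<N. om t i - om t j) = real N * om t i - (\<Sum>j<N. om t j)"
        by (simp add: sum_subtractf)
      then have eq: "real N * om t i = (\<Sum>j<N. om t i - om t j)" using st by simp
      have "\<bar>real N * om t i\<bar> \<le> (\<Sum>j<N. \<bar>om t i - om t j\<bar>)" unfolding eq by (rule sum_abs)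
      also have "\<dots> < (\<Sum>j<N. e)"
      proof (rule sum_strict_mono)
        show "finite {..<N}" by simp
        show "{..<N} \<noteq> {}" using N0 by auto
        fix j assume "j \<in> {..<N}"
        then show "\<bar>om t i - om t j\<bar> < e" using T t i by (auto simp: abs_minus_commute)
      qed
      also have "\<dots> = real N * e" by simp
      finally have "real N * \<bar>om t i\<bar> < real N * e" by (simp add: abs_mult)
      then show ?thesis using Nr by simp
    qed
    define S where "S = {\<bar>om t i\<bar> | i. i < N}"
    have fS: "finite S" unfolding S_def by (rule finite_image_set) simp
    have z: "\<bar>om t 0\<bar> \<in> S" unfolding S_def using N0 by blast
    then have nS: "S \<noteq> {}" by auto
    have ge: "0 \<le> Max S" using Max_ge[OF fS z] by simp
    have lt: "Max S < e" using fS nS each unfolding S_def by (subst Max_less_iff) auto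
    show "dist (Max {\<bar>om t i\<bar> | i. i < N}) 0 < e"
      using ge lt unfolding S_def[symmetric] by simp
  qed
qed

end

theorem theorem3p2:
  fixes N :: nat and k0 k1 k2 :: real
    and thinf :: "nat \<Rightarrow> nat \<Rightarrow> real"
    and th om :: "real \<Rightarrow> nat \<Rightarrow> real"
  assumes N2: "N \<ge> 2"
    and k0: "k0 \<ge> 0" and k1: "k1 \<ge> 0" and k2: "k2 > 0"
    and sym: "\<forall>i<N. \<forall>j<N. thinf i j = thinf j i"
    and diag: "\<forall>i<N. thinf i i = 0"
    and ode_th: "\<forall>i<N. \<forall>t\<ge>0. ((\<lambda>s. th s i) has_real_derivative om t i) (at t within {0..})"
    and ode_om: "\<forall>i<N. \<forall>t\<ge>0. ((\<lambda>s. om s i) has_real_derivative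
                   kur_rhs N k0 k1 k2 thinf (th t) (om t) i) (at t within {0..})"
    and init_S: "\<forall>i<N. \<forall>j<N. \<bar>th 0 i - th 0 j\<bar> < kur_U N k2 thinf (kur_energy N k2 thinf (th 0) (om 0))"
    and U_pi: "kur_U N k2 thinf (kur_energy N k2 thinf (th 0) (om 0)) < pi"
    and E0: "kur_energy N k2 thinf (th 0) (om 0)
               < k2 * (Min {thinf i j | i j. i < N \<and> j < N \<and> i \<noteq> j})\<^sup>2 / (2 * real N)"
    and coup: "k0 * cos (kur_U N k2 thinf (kur_energy N k2 thinf (th 0) (om 0))) + k1 > 0"
  shows "((\<lambda>t. Max {\<bar>om t j - om t i\<bar> | i j. i < N \<and> j < N}) \<longlongrightarrow> 0) at_top
         \<and> ((\<Sum>i<N. om 0 i) = 0 \<longrightarrow> ((\<lambda>t. Max {\<bar>om t i\<bar> | i. i < N}) \<longlongrightarrow> 0) at_top)"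
proof -
  interpret kur N k0 k1 k2 thinf th om
    using N2 k0 k1 k2 sym diag ode_th ode_om init_S U_pi E0 coup by unfold_locales
  show ?thesis using part1 part2 by blast
qed

end
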